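(* Let $\epsilon=\mu=\gamma=\chi=1$, $M>0$, $T>0$. Consider the Crank–Nicolson bound-preserving scheme started from $0\le\rho_h^0\le M$ (nodewise), $c_h^0\in X_h$, with $\rho_h^{-1}=\rho_h^0$, $c_h^{-1}=\tilde c_h^0=c_h^0$, $\lambda_h^0\equiv0$, $\xi_h^0=0$. Then there is a constant $C>0$ depending only on $M$ and $T$ such that for all $m\ge1$ with $m\delta t\le T$, $$\|\rho_h^m\|^2+\|\nabla_hc_h^m\|^2+\delta t\sum_{n=0}^{m-1}\|\Delta_h\tilde c_h^{n+\frac12}\|^2+\tfrac{\delta t^2}4\|\lambda_h^mg'(\rho_h^m)+\xi_h^m\|^2+\delta t\sum_{n=0}^{m-1}\|\nabla_h\tilde\rho_h^{n+\frac12}\|^2\le C\big(\|\rho_h^0\|^2+\|\nabla_hc_h^0\|^2\big).$$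
   Context: Discrete setting: $\Sigma_h$ finite set of nodes in $\bar\Omega\subset\mathbb R^d$; $X_h$ = real grid functions on $\Sigma_h$, nonlinear functions act pointwise. $[u,v]=\sum_z\beta_zu(z)v(z)$, $\beta_z>0$ (vector version $\sum_z\beta_zw(z)\cdot w'(z)$), $\|u\|=[u,u]^{1/2}$, $|\Omega|=[1,1]$. $\nabla_h,\nabla_h\cdot$ satisfy $[\nabla_h\cdot w,v]=-[w,\nabla_hv]$, $\nabla_h1=0$ (periodic boundary conditions); $\Delta_h=\nabla_h\cdot\nabla_h$. $\sigma,\delta t>0$. $\eta(\rho)=\frac{\rho(M-\rho)}M$, $g(\rho)=\rho(M-\rho)$, $g'(\rho)=M-2\rho$. Notation $\tilde c_h^{n+\frac12}=\frac{\tilde c_h^{n+1}+c_h^n}2$, $\tilde\rho_h^{n+\frac12}=\frac{\tilde\rho_h^{n+1}+\rho_h^n}2$, $\rho_h^{n+\frac12}=\frac{\rho_h^{n+1}+\rho_h^n}2$. Crank–Nicolson bound-preserving scheme ($\epsilon=\mu=\gamma=\chi=1$), for $n\ge0$: Step 1: $\frac{\tilde c_h^{n+1}-c_h^n}{\delta t}=\Delta_h\tilde c_h^{n+\frac12}+\frac32\rho_h^n-\frac12\rho_h^{n-1}$. Step 2: $\frac{\tilde\rho_h^{n+1}-\rho_h^n}{\delta t}=\Delta_h\tilde\rho_h^{n+\frac12}-\nabla_h\cdot(\eta(\frac32\rho_h^n-\frac12\rho_h^{n-1})\nabla_h(\frac32c_h^n-\frac12c_h^{n-1}))+\lambda_h^ng'(\rho_h^n)+\xi_h^n$.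 Step 3: find $\rho_h^{n+1},\lambda_h^{n+1}\in X_h$, $\xi_h^{n+1}\in\mathbb R$ with $\frac{\rho_h^{n+1}-\tilde\rho_h^{n+1}}{\delta t}=\frac{\lambda_h^{n+1}g'(\rho_h^{n+1})+\xi_h^{n+1}-\lambda_h^ng'(\rho_h^n)-\xi_h^n}2$ nodewise, $g(\rho_h^{n+1})\ge0$, $\lambda_h^{n+1}\ge0$, $\lambda_h^{n+1}g(\rho_h^{n+1})=0$ at every node, $[\rho_h^{n+1},1]=[\rho_h^0,1]$. Step 4: find $c_h^{n+1}$ and scalar $\theta_h^{n+\frac12}$ with $\frac{c_h^{n+1}-\tilde c_h^{n+1}}{\delta t}=\theta_h^{n+\frac12}$ and $\frac{E_h^{n+1}-E_h^n}{\delta t}=-[\eta(\rho_h^{n+\frac12})|\nabla_h(\log(\rho_h^{n+\frac12}+\sigma)-\tilde c_h^{n+\frac12})|^2+|\frac{\tilde c_h^{n+1}-\tilde c_h^n}{\delta t}|^2,1]$, where $E_h^j=[\rho_h^j\log(\rho_h^j+\sigma)+(M-\rho_h^j)\log(1-\rho_h^j/M+\sigma)-\rho_h^jc_h^j+\frac12|\nabla_hc_h^j|^2,1]$. *)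

theory Defs
  imports "HOL-Analysis.Analysis"
begin

text \<open>Grid functions are
  real-valued functions on R^d of which only the values on S matter; discrete vector
  fields take values in R^d.\<close>

type_synonym 'd gfun = "real^'d \<Rightarrow> real"
type_synonym 'd vfun = "real^'d \<Rightarrow> real^'d"

definition dip :: "(real^'d) set \<Rightarrow> 'd gfun \<Rightarrow> 'd gfun \<Rightarrow> 'd gfun \<Rightarrow> real" where
  "dip S beta u v = (\<Sum>z\<in>S. beta z * u z * v z)"

definition dvip :: "(real^'d) set \<Rightarrow> 'd gfun \<Rightarrow> 'd vfun \<Rightarrow> 'd vfun \<Rightarrow> real" where
  "dvip S beta w w' = (\<Sum>z\<in>S. beta z * (w z \<bullet> w' z))"

definition dnorm :: "(real^'d) set \<Rightarrow> 'd gfun \<Rightarrow> 'd gfun \<Rightarrow> real" where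
  "dnorm S beta u = sqrt (dip S beta u u)"

definition dvnorm :: "(real^'d) set \<Rightarrow> 'd gfun \<Rightarrow> 'd vfun \<Rightarrow> real" where
  "dvnorm S beta w = sqrt (dvip S beta w w)"

text \<open>Admissible discrete setting: finite node set, positive weights, discrete gradient and
  divergence satisfying the summation-by-parts identity [div w, v] = -[w, grad v]
  and grad 1 = 0 (periodic boundary conditions).\<close>
definition disc_setting ::
  "(real^'d) set \<Rightarrow> 'd gfun \<Rightarrow> ('d gfun \<Rightarrow> 'd vfun) \<Rightarrow> ('d vfun \<Rightarrow> 'd gfun) \<Rightarrow> bool" where
  "disc_setting S beta grad dv \<longleftrightarrow>
     finite S \<and> (\<forall>z\<in>S. beta z > 0) \<and>
     (\<forall>w v. dip S beta (dv w) v = - dvip S beta w (grad v)) \<and>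
     (\<forall>z\<in>S. grad (\<lambda>_. 1) z = 0)"

definition dlap :: "('d gfun \<Rightarrow> 'd vfun) \<Rightarrow> ('d vfun \<Rightarrow> 'd gfun) \<Rightarrow> 'd gfun \<Rightarrow> 'd gfun" where
  "dlap grad dv u = dv (grad u)"

definition eta :: "real \<Rightarrow> real \<Rightarrow> real" where
  "eta M r = r * (M - r) / M"

definition gfn :: "real \<Rightarrow> real \<Rightarrow> real" where
  "gfn M r = r * (M - r)"

definition gder :: "real \<Rightarrow> real \<Rightarrow> real" where
  "gder M r = M - 2 * r"

text \<open>Value at index n-1, with the convention s(-1) = s(0).\<close>
definition prv :: "(nat \<Rightarrow> 'a) \<Rightarrow> nat \<Rightarrow> 'a" where
  "prv s n = (if n = 0 then s 0 else s (n - 1))"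

definition energy :: "(real^'d) set \<Rightarrow> 'd gfun \<Rightarrow> ('d gfun \<Rightarrow> 'd vfun) \<Rightarrow> real \<Rightarrow> real
    \<Rightarrow> 'd gfun \<Rightarrow> 'd gfun \<Rightarrow> real" where
  "energy S beta grad M \<sigma> r c =
     dip S beta (\<lambda>z. r z * ln (r z + \<sigma>) + (M - r z) * ln (1 - r z / M + \<sigma>) - r z * c z
                     + (1/2) * (norm (grad c z))\<^sup>2) (\<lambda>_. 1)"

text \<open>Index conventions: rho n = rho_h^n, c n = c_h^n,
  ct n = tilde c_h^n, rt n = tilde rho_h^n, lam n = lambda_h^n, xi n = xi_h^n,
  th n = theta_h^{n+1/2}.\<close>
definition cn_scheme ::
  "(real^'d) set \<Rightarrow> 'd gfun \<Rightarrow> ('d gfun \<Rightarrow> 'd vfun) \<Rightarrow> ('d vfun \<Rightarrow> 'd gfun)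
   \<Rightarrow> real \<Rightarrow> real \<Rightarrow> real
   \<Rightarrow> (nat \<Rightarrow> 'd gfun) \<Rightarrow> (nat \<Rightarrow> 'd gfun) \<Rightarrow> (nat \<Rightarrow> 'd gfun) \<Rightarrow> (nat \<Rightarrow> 'd gfun)
   \<Rightarrow> (nat \<Rightarrow> 'd gfun) \<Rightarrow> (nat \<Rightarrow> real) \<Rightarrow> (nat \<Rightarrow> real) \<Rightarrow> nat \<Rightarrow> bool" where
  "cn_scheme S beta grad dv M \<sigma> dt rho c ct rt lam xi th m \<longleftrightarrow>
     \<comment> \<open>initialisation\<close>
     (\<forall>z\<in>S. 0 \<le> rho 0 z \<and> rho 0 z \<le> M) \<and>
     ct 0 = c 0 \<and> (\<forall>z\<in>S. lam 0 z = 0) \<and> xi 0 = 0 \<and>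
     (\<forall>n<m.
       \<comment> \<open>Step 1\<close>
       (\<forall>z\<in>S. (ct (Suc n) z - c n z) / dt
           = dlap grad dv (\<lambda>y. (ct (Suc n) y + c n y) / 2) z
             + 3/2 * rho n z - 1/2 * prv rho n z) \<and>
       \<comment> \<open>Step 2\<close>
       (\<forall>z\<in>S. (rt (Suc n) z - rho n z) / dt
           = dlap grad dv (\<lambda>y. (rt (Suc n) y + rho n y) / 2) z
             - dv (\<lambda>y. eta M (3/2 * rho n y - 1/2 * prv rho n y)
                        *\<^sub>R grad (\<lambda>x. 3/2 * c n x - 1/2 * prv c n x) y) z
             + lam n z * gder M (rho n z) + xi n) \<and>
       \<comment> \<open>Step 3\<close>
       (\<forall>z\<in>S. (rho (Suc n) z - rt (Suc n) z) / dt
           = (lam (Suc n) z * gder M (rho (Suc n) z) + xi (Suc n)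
              - lam n z * gder M (rho n z) - xi n) / 2 \<and>
         gfn M (rho (Suc n) z) \<ge> 0 \<and> lam (Suc n) z \<ge> 0 \<and>
         lam (Suc n) z * gfn M (rho (Suc n) z) = 0) \<and>
       dip S beta (rho (Suc n)) (\<lambda>_. 1) = dip S beta (rho 0) (\<lambda>_. 1) \<and>
       \<comment> \<open>Step 4\<close>
       (\<forall>z\<in>S. (c (Suc n) z - ct (Suc n) z) / dt = th n) \<and>
       (energy S beta grad M \<sigma> (rho (Suc n)) (c (Suc n)) - energy S beta grad M \<sigma> (rho n) (c n)) / dt
         = - dip S beta
               (\<lambda>z. eta M ((rho (Suc n) z + rho n z) / 2)
                    * (norm (grad (\<lambda>y. ln ((rho (Suc n) y + rho n y) / 2 + \<sigma>)
                                        - (ct (Suc n) y + c n y) / 2) z))\<^sup>2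
                    + ((ct (Suc n) z - ct n z) / dt)\<^sup>2)
               (\<lambda>_. 1))"

end

theory Submission
  imports Defs
begin


lemma dvip_self_zero:
  assumes "finite S" "\<forall>z\<in>S. beta z > 0" "dvip S beta w w = 0" "z \<in> S"
  shows "w z = 0"
proof -
  have nn: "\<And>y. y \<in> S \<Longrightarrow> 0 \<le> beta y * (w y \<bullet> w y)"
    using assms(2) by (simp add: less_imp_le)
  have "\<forall>y\<in>S. beta y * (w y \<bullet> w y) = 0"
  proof -
    have "(\<Sum>y\<in>S. beta y * (w y \<bullet> w y)) = 0" using assms(3) by (simp only: dvip_def)
    then show ?thesis by (simp only: sum_nonneg_eq_0_iff[OF assms(1) nn])
  qed
  then have "beta z * (w z \<bullet> w z) = 0" using assms(4) by (rule bspec)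
  moreover have "beta z > 0" using assms(2,4) by (rule bspec)
  ultimately have "w z \<bullet> w z = 0" by simp
  then show ?thesis by (simp only: inner_eq_zero_iff)
qed

lemma ds_fin: "disc_setting S beta grad dv \<Longrightarrow> finite S"
  unfolding disc_setting_def by (rule conjunct1)
lemma ds_pos: "disc_setting S beta grad dv \<Longrightarrow> \<forall>z\<in>S. beta z > 0"
  unfolding disc_setting_def by (drule conjunct2, rule conjunct1)
lemma ds_sbp0: "disc_setting S beta grad dv \<Longrightarrow> \<forall>w v. dip S beta (dv w) v = - dvip S beta w (grad v)"
  unfolding disc_setting_def by (drule conjunct2, drule conjunct2, rule conjunct1)
lemma ds_grad1: "disc_setting S beta grad dv \<Longrightarrow> \<forall>z\<in>S. grad (\<lambda>_. 1) z = 0"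
  unfolding disc_setting_def by (drule conjunct2, drule conjunct2, rule conjunct2)

lemma sbp: "disc_setting S beta grad dv \<Longrightarrow> dvip S beta w (grad v) = - dip S beta (dv w) v"
  using ds_sbp0[of S beta grad dv] by simp

lemma dvip_diff2: "dvip S beta w (\<lambda>z. X z - Y z) = dvip S beta w X - dvip S beta w Y"
proof -
  have "dvip S beta w (\<lambda>z. X z - Y z) = (\<Sum>z\<in>S. beta z * (w z \<bullet> X z) - beta z * (w z \<bullet> Y z))"
    unfolding dvip_def by (rule sum.cong[OF refl]) (simp only: inner_diff_right right_diff_distrib)
  then show ?thesis unfolding dvip_def by (simp only: sum_subtractf)
qed

lemma dvip_lin2: "dvip S beta w (\<lambda>z. a *\<^sub>R X z + b *\<^sub>R Y z) = a * dvip S beta w X + b * dvip S beta w Y"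
proof -
  have "dvip S beta w (\<lambda>z. a *\<^sub>R X z + b *\<^sub>R Y z) = (\<Sum>z\<in>S. a * (beta z * (w z \<bullet> X z)) + b * (beta z * (w z \<bullet> Y z)))"
    unfolding dvip_def by (rule sum.cong[OF refl]) (simp only: inner_add_right inner_scaleR_right distrib_left mult.left_commute)
  then show ?thesis unfolding dvip_def by (simp only: sum.distrib sum_distrib_left)
qed

lemma dip_lin2: "dip S beta f (\<lambda>z. a * X z + b * Y z) = a * dip S beta f X + b * dip S beta f Y"
proof -
  have "dip S beta f (\<lambda>z. a * X z + b * Y z) = (\<Sum>z\<in>S. a * (beta z * f z * X z) + b * (beta z * f z * Y z))"
    unfolding dip_def by (rule sum.cong[OF refl]) (simp only: distrib_left mult.left_commute)
  then show ?thesis unfolding dip_def by (simp only: sum.distrib sum_distrib_left)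
qed

lemma vec_eq_from_dvip:
  assumes fin: "finite S" and b: "\<forall>z\<in>S. beta z > 0"
    and h: "\<And>w. dvip S beta w X = dvip S beta w Y" and z: "z \<in> S"
  shows "X z = Y z"
proof -
  have "dvip S beta (\<lambda>z. X z - Y z) (\<lambda>z. X z - Y z) = 0"
    by (simp only: dvip_diff2 h diff_self)
  then have "(\<lambda>z. X z - Y z) z = 0" by (rule dvip_self_zero[OF fin b _ z])
  then show ?thesis by simp
qed

lemma grad_ext:
  assumes ds: "disc_setting S beta grad dv" and eq: "\<forall>y\<in>S. u y = v y" and z: "z \<in> S"
  shows "grad u z = grad v z"
proof (rule vec_eq_from_dvip[OF _ _ _ z])
  show "finite S" "\<forall>z\<in>S. beta z > 0" using ds_fin[OF ds] ds_pos[OF ds] by auto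
  fix w
  show "dvip S beta w (grad u) = dvip S beta w (grad v)"
    unfolding sbp[OF ds] dip_def
    by (rule arg_cong[where f=uminus], rule sum.cong[OF refl]) (use eq in simp)
qed

lemma grad_lin:
  assumes ds: "disc_setting S beta grad dv" and z: "z \<in> S"
  shows "grad (\<lambda>y. a * u y + b * v y) z = a *\<^sub>R grad u z + b *\<^sub>R grad v z"
proof -
  have "grad (\<lambda>y. a * u y + b * v y) z = (\<lambda>z. a *\<^sub>R grad u z + b *\<^sub>R grad v z) z"
  proof (rule vec_eq_from_dvip[OF _ _ _ z])
    show "finite S" "\<forall>z\<in>S. beta z > 0" using ds_fin[OF ds] ds_pos[OF ds] by auto
    fix w
    show "dvip S beta w (grad (\<lambda>y. a * u y + b * v y)) = dvip S beta w (\<lambda>z. a *\<^sub>R grad u z + b *\<^sub>R grad v z)"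
      unfolding dvip_lin2 sbp[OF ds] dip_lin2 by simp
  qed
  then show ?thesis by simp
qed

lemma grad_const:
  assumes ds: "disc_setting S beta grad dv" and z: "z \<in> S"
  shows "grad (\<lambda>_. k) z = 0"
proof -
  have "grad (\<lambda>y. k * 1 + 0 * 1) z = k *\<^sub>R grad (\<lambda>_. 1) z + 0 *\<^sub>R grad (\<lambda>_. 1) z"
    by (rule grad_lin[OF ds z])
  then show ?thesis using ds_grad1[OF ds] z by simp
qed

lemma dv_one: "disc_setting S beta grad dv \<Longrightarrow> dip S beta (dv w) (\<lambda>_. 1) = 0"
proof -
  assume ds: "disc_setting S beta grad dv"
  have "dip S beta (dv w) (\<lambda>_. 1) = - dvip S beta w (grad (\<lambda>_. 1))" using sbp[OF ds] by simp
  also have "\<dots> = 0" unfolding dvip_def using ds_grad1[OF ds] by simp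
  finally show ?thesis .
qed



lemma dip_cong: "(\<forall>z\<in>S. f z = g z) \<Longrightarrow> dip S beta f v = dip S beta g v"
  unfolding dip_def by (rule sum.cong) auto
lemma dip_cong2: "(\<forall>z\<in>S. f z = g z) \<Longrightarrow> dip S beta v f = dip S beta v g"
  unfolding dip_def by (rule sum.cong) auto
lemma dip_comm: "dip S beta f g = dip S beta g f"
  unfolding dip_def by (simp add: mult.commute mult.left_commute)
lemma dip_add: "dip S beta (\<lambda>z. f z + g z) v = dip S beta f v + dip S beta g v"
  unfolding dip_def by (simp add: algebra_simps sum.distrib)
lemma dip_diff: "dip S beta (\<lambda>z. f z - g z) v = dip S beta f v - dip S beta g v"
  unfolding dip_def by (simp add: algebra_simps sum_subtractf)
lemma dip_scal: "dip S beta (\<lambda>z. a * f z) v = a * dip S beta f v"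
  unfolding dip_def by (simp add: algebra_simps sum_distrib_left)
lemma dip_const: "dip S beta (\<lambda>z. a) v = a * dip S beta v (\<lambda>_. 1)"
  unfolding dip_def by (simp add: algebra_simps sum_distrib_left)
lemma dip_nonneg: assumes b: "\<forall>z\<in>S. beta z > 0" shows "dip S beta f f \<ge> 0"
  unfolding dip_def
proof (rule sum_nonneg)
  fix x assume "x \<in> S"
  then have "beta x > 0" using b by blast
  then have "0 \<le> beta x * (f x * f x)" by simp
  then show "0 \<le> beta x * f x * f x" by (simp only: mult.assoc)
qed
lemma dvip_nonneg: assumes b: "\<forall>z\<in>S. beta z > 0" shows "dvip S beta f f \<ge> 0"
  unfolding dvip_def
proof (rule sum_nonneg)
  fix x assume "x \<in> S"
  then have "beta x > 0" using b by blast
  then show "0 \<le> beta x * (f x \<bullet> f x)" by simp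
qed
lemma dip_le: "(\<forall>z\<in>S. beta z * f z \<le> beta z * g z) \<Longrightarrow> dip S beta f (\<lambda>_. 1) \<le> dip S beta g (\<lambda>_. 1)"
  unfolding dip_def by (intro sum_mono) auto
lemma dnorm_sq: "\<forall>z\<in>S. beta z > 0 \<Longrightarrow> (dnorm S beta f)\<^sup>2 = dip S beta f f"
  unfolding dnorm_def using dip_nonneg by simp
lemma dvnorm_sq: "\<forall>z\<in>S. beta z > 0 \<Longrightarrow> (dvnorm S beta f)\<^sup>2 = dvip S beta f f"
  unfolding dvnorm_def using dvip_nonneg by simp

lemma ineq_sq: "(3/2*a - 1/2*b)^2 \<le> 9/2*a^2 + 1/2*(b::real)^2"
proof -
  have "0 \<le> (3/2*a+1/2*b)^2" by simp
  then show ?thesis by (simp add: power2_eq_square algebra_simps)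
qed

lemma dip_prod1: "dip S beta (\<lambda>z. f z * g z) (\<lambda>_. 1) = dip S beta f g"
  unfolding dip_def by (simp only: mult.assoc mult_1_right)
lemma dip_pw_nonneg: assumes b: "\<forall>z\<in>S. beta z > 0" and p: "\<forall>z\<in>S. f z \<ge> 0"
  shows "dip S beta f (\<lambda>_. 1) \<ge> 0"
  unfolding dip_def
proof (rule sum_nonneg)
  fix x assume x: "x \<in> S"
  then have "beta x > 0" using b by blast
  moreover have "f x \<ge> 0" using p x by blast
  ultimately show "0 \<le> beta x * f x * 1" by simp
qed
lemma dvip_cong: "(\<forall>z\<in>S. f z = g z) \<Longrightarrow> (\<forall>z\<in>S. f' z = g' z) \<Longrightarrow> dvip S beta f f' = dvip S beta g g'"
  unfolding dvip_def by (rule sum.cong) auto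

lemma gfn_range: assumes "(M::real) > 0" "r * (M - r) \<ge> 0" shows "0 \<le> r \<and> r \<le> M"
proof (rule ccontr)
  assume "\<not> (0 \<le> r \<and> r \<le> M)"
  then consider "r < 0" | "r > M" by linarith
  then show False
  proof cases
    case 1 then have "M - r > 0" using assms(1) by linarith
    then have "r * (M - r) < 0" using 1 by (simp add: mult_neg_pos)
    then show False using assms(2) by linarith
  next
    case 2 then have "M - r < 0" "r > 0" using assms(1) by linarith+
    then have "r * (M - r) < 0" by (simp add: mult_pos_neg)
    then show False using assms(2) by linarith
  qed
qed

lemma eta_bound: assumes M: "(M::real) > 0" and a: "0 \<le> a" "a \<le> M" and b: "0 \<le> b" "b \<le> M"
  shows "(eta M (3/2*a - 1/2*b))^2 \<le> 9*M^2/16"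
proof -
  define r where "r = 3/2*a - 1/2*b"
  have r1: "-M/2 \<le> r" "r \<le> 3*M/2" using a b unfolding r_def by linarith+
  have up: "r*(M-r) \<le> M^2/4"
  proof -
    have "0 \<le> (r - M/2)^2" by simp
    then show ?thesis by (simp add: power2_eq_square algebra_simps)
  qed
  have lo: "r*(M-r) \<ge> -(3*M^2/4)"
  proof -
    have "0 \<le> (r + M/2) * (3*M/2 - r)" using r1 by (intro mult_nonneg_nonneg) linarith+
    then show ?thesis by (simp add: power2_eq_square algebra_simps)
  qed
  have "\<bar>r*(M-r)\<bar> \<le> 3*M^2/4" using up lo M by (simp add: abs_le_iff)
  then have "(r*(M-r))^2 \<le> (3*M^2/4)^2"
    by (metis abs_ge_zero power2_abs power_mono)
  then have "(r*(M-r))^2 / M^2 \<le> (3*M^2/4)^2 / M^2" using M by (intro divide_right_mono) simp_all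
  then have "(r*(M-r)/M)^2 \<le> (3*M^2/4)^2 / M^2" by (simp only: power_divide)
  also have "\<dots> = 9*M^2/16" using M by (simp add: power2_eq_square field_simps)
  finally show ?thesis unfolding eta_def r_def .
qed



lemma pw_lam:
  fixes l r a M :: real
  assumes "0 \<le> l" "l * (r * (M - r)) = 0" "0 \<le> a" "a \<le> M"
  shows "l * (M - 2 * r) * (r - a) \<le> 0"
proof (cases "l = 0")
  case True then show ?thesis by simp
next
  case False
  then have "r * (M - r) = 0" using assms(2) by simp
  then have "r = 0 \<or> r = M" by auto
  then show ?thesis
  proof
    assume r: "r = 0"
    have "0 \<le> l * M * a" using assms by (intro mult_nonneg_nonneg) linarith+
    then show ?thesis using r by (simp add: algebra_simps)
  next
    assume r: "r = M"
    have "0 \<le> l * M * (M - a)" using assms by (intro mult_nonneg_nonneg) linarith+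
    then show ?thesis using r by (simp add: algebra_simps)
  qed
qed

lemma qrho_gen:
  assumes fin: "finite S" and b: "\<forall>z\<in>S. beta z > 0"
    and h: "\<forall>z\<in>S. 0 \<le> l z \<and> l z * (r z * (M - r z)) = 0 \<and> 0 \<le> r z \<and> r z \<le> M"
    and s: "dip S beta (\<lambda>z. l z * (M - 2 * r z) + x) (\<lambda>_. 1) = 0"
  shows "dip S beta (\<lambda>z. l z * (M - 2 * r z) + x) r \<le> 0"
proof (cases "S = {}")
  case True then show ?thesis by (simp add: dip_def)
next
  case False
  define W where "W = dip S beta (\<lambda>_. 1) (\<lambda>_. 1)"
  have Wpos: "W > 0" unfolding W_def dip_def
    by (rule sum_pos[OF fin False]) (use b in simp)
  define a where "a = dip S beta r (\<lambda>_. 1) / W"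
  have r0: "dip S beta r (\<lambda>_. 1) \<ge> 0" using h by (intro dip_pw_nonneg[OF b]) blast
  have a0: "0 \<le> a" unfolding a_def using r0 Wpos by simp
  have "dip S beta r (\<lambda>_. 1) \<le> dip S beta (\<lambda>z. M) (\<lambda>_. 1)"
  proof (rule dip_le, rule ballI)
    fix z assume z: "z \<in> S"
    then have "r z \<le> M" "beta z > 0" using h b by blast+
    then show "beta z * r z \<le> beta z * M" by simp
  qed
  also have "\<dots> = M * W" unfolding W_def by (rule dip_const)
  finally have "dip S beta r (\<lambda>_. 1) \<le> M * W" .
  then have aM: "a \<le> M" unfolding a_def using Wpos by (simp add: pos_divide_le_eq)
  have aW: "a * W = dip S beta r (\<lambda>_. 1)" unfolding a_def using Wpos by simp
  have ra: "dip S beta (\<lambda>z. r z - a) (\<lambda>_. 1) = 0"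
  proof -
    have "dip S beta (\<lambda>z. r z - a) (\<lambda>_. 1) = dip S beta r (\<lambda>_. 1) - dip S beta (\<lambda>z. a) (\<lambda>_. 1)"
      by (rule dip_diff)
    also have "dip S beta (\<lambda>z. a) (\<lambda>_. 1) = a * W" unfolding W_def by (rule dip_const)
    finally show ?thesis using aW by simp
  qed
  define q where "q = (\<lambda>z. l z * (M - 2 * r z) + x)"
  have e1: "dip S beta (\<lambda>z. r z - a) q = dip S beta r q - a * dip S beta q (\<lambda>_. 1)"
  proof -
    have "dip S beta (\<lambda>z. r z - a) q = dip S beta r q - dip S beta (\<lambda>z. a) q" by (rule dip_diff)
    also have "dip S beta (\<lambda>z. a) q = a * dip S beta q (\<lambda>_. 1)" by (rule dip_const)
    finally show ?thesis .
  qed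
  have e2: "dip S beta q (\<lambda>z. r z - a) = dip S beta (\<lambda>z. l z * (M - 2 * r z)) (\<lambda>z. r z - a)
       + x * dip S beta (\<lambda>z. r z - a) (\<lambda>_. 1)"
  proof -
    have "dip S beta q (\<lambda>z. r z - a) = dip S beta (\<lambda>z. l z * (M - 2 * r z)) (\<lambda>z. r z - a) + dip S beta (\<lambda>z. x) (\<lambda>z. r z - a)"
      unfolding q_def by (rule dip_add)
    also have "dip S beta (\<lambda>z. x) (\<lambda>z. r z - a) = x * dip S beta (\<lambda>z. r z - a) (\<lambda>_. 1)" by (rule dip_const)
    finally show ?thesis .
  qed
  have e3: "dip S beta (\<lambda>z. l z * (M - 2 * r z)) (\<lambda>z. r z - a) \<le> 0"
    unfolding dip_def
  proof (rule sum_nonpos)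
    fix z assume z: "z \<in> S"
    then have hz: "0 \<le> l z" "l z * (r z * (M - r z)) = 0" "beta z > 0" using h b by blast+
    have "l z * (M - 2 * r z) * (r z - a) \<le> 0" by (rule pw_lam[OF hz(1,2) a0 aM])
    then have "beta z * (l z * (M - 2 * r z) * (r z - a)) \<le> 0" using hz(3)
      by (simp add: mult_nonneg_nonpos)
    then show "beta z * (l z * (M - 2 * r z)) * (r z - a) \<le> 0" by (simp only: mult.assoc)
  qed
  have sq: "dip S beta q (\<lambda>_. 1) = 0" using s unfolding q_def .
  have "dip S beta q r = dip S beta r q" by (rule dip_comm)
  also have "\<dots> = dip S beta (\<lambda>z. r z - a) q" using e1 sq by simp
  also have "\<dots> = dip S beta q (\<lambda>z. r z - a)" by (rule dip_comm)
  also have "\<dots> \<le> 0" using e2 e3 ra by simp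
  finally show ?thesis unfolding q_def .
qed




lemma gronwall:
  fixes P a :: "nat \<Rightarrow> real" and h :: real
  assumes h: "h \<ge> 0" and P0: "P 0 \<ge> 0" and aP: "\<forall>k\<le>m. a k \<le> P k"
    and st: "\<forall>n<m. P (Suc n) \<le> P n + h * (a n + a (n - 1))"
  shows "n \<le> m \<Longrightarrow> \<forall>k\<le>n. P k \<le> (1 + 2*h)^n * P 0"
proof (induction n)
  case 0 then show ?case by simp
next
  case (Suc n)
  then have IH: "\<forall>k\<le>n. P k \<le> (1 + 2*h)^n * P 0" and nm: "n < m" by simp_all
  define B where "B = (1 + 2*h)^n * P 0"
  have B0: "B \<ge> 0" unfolding B_def using h P0 by simp
  have mono: "B \<le> (1 + 2*h)^(Suc n) * P 0"
  proof -
    have "B = 1 * B" by simp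
    also have "\<dots> \<le> (1 + 2*h) * B" using h B0 by (intro mult_right_mono) simp_all
    finally show ?thesis unfolding B_def by simp
  qed
  have an: "a n \<le> B" using aP IH nm unfolding B_def by (meson le_refl less_imp_le order_trans)
  have an1: "a (n - 1) \<le> B" using aP IH nm unfolding B_def
    by (meson diff_le_self le_trans less_imp_le order_trans)
  have "P (Suc n) \<le> P n + h * (a n + a (n - 1))" using st nm by blast
  also have "\<dots> \<le> B + h * (B + B)"
    using IH an an1 h unfolding B_def by (intro add_mono mult_left_mono) simp_all
  also have "\<dots> = (1 + 2*h)^(Suc n) * P 0" unfolding B_def by (simp add: algebra_simps)
  finally have "P (Suc n) \<le> (1 + 2*h)^(Suc n) * P 0" .
  then show ?case using IH mono unfolding B_def by (metis le_Suc_eq order_trans)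
qed

locale cnl =
  fixes S :: "(real^'d) set" and beta :: "'d gfun" and grad :: "'d gfun \<Rightarrow> 'd vfun"
    and dv :: "'d vfun \<Rightarrow> 'd gfun" and M \<sigma> dt :: real
    and rho c ct rt lam :: "nat \<Rightarrow> 'd gfun" and xi th :: "nat \<Rightarrow> real" and m :: nat
  assumes ds: "disc_setting S beta grad dv" and Mpos: "M > 0" and dtpos: "dt > 0"
    and sch: "cn_scheme S beta grad dv M \<sigma> dt rho c ct rt lam xi th m"
begin

lemma fin: "finite S" by (rule ds_fin[OF ds])
lemma bpos: "\<forall>z\<in>S. beta z > 0" by (rule ds_pos[OF ds])

lemmas sch' = sch[unfolded cn_scheme_def]
lemmas init_rho = sch'[THEN conjunct1]
lemmas lam0 = sch'[THEN conjunct2, THEN conjunct2, THEN conjunct1]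
lemmas xi0 = sch'[THEN conjunct2, THEN conjunct2, THEN conjunct2, THEN conjunct1]
lemmas allsteps = sch'[THEN conjunct2, THEN conjunct2, THEN conjunct2, THEN conjunct2]

lemma st1: assumes "n < m" "z \<in> S"
  shows "(ct (Suc n) z - c n z) / dt
           = dlap grad dv (\<lambda>y. (ct (Suc n) y + c n y) / 2) z
             + 3/2 * rho n z - 1/2 * prv rho n z"
  using allsteps[rule_format, OF assms(1), THEN conjunct1] assms(2) by (rule bspec)

lemma st2: assumes "n < m" "z \<in> S"
  shows "(rt (Suc n) z - rho n z) / dt
           = dlap grad dv (\<lambda>y. (rt (Suc n) y + rho n y) / 2) z
             - dv (\<lambda>y. eta M (3/2 * rho n y - 1/2 * prv rho n y)
                        *\<^sub>R grad (\<lambda>x. 3/2 * c n x - 1/2 * prv c n x) y) z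
             + lam n z * gder M (rho n z) + xi n"
  using allsteps[rule_format, OF assms(1), THEN conjunct2, THEN conjunct1] assms(2) by (rule bspec)

lemma st3: assumes "n < m" "z \<in> S"
  shows "(rho (Suc n) z - rt (Suc n) z) / dt
           = (lam (Suc n) z * gder M (rho (Suc n) z) + xi (Suc n)
              - lam n z * gder M (rho n z) - xi n) / 2 \<and>
         gfn M (rho (Suc n) z) \<ge> 0 \<and> lam (Suc n) z \<ge> 0 \<and>
         lam (Suc n) z * gfn M (rho (Suc n) z) = 0"
  using allsteps[rule_format, OF assms(1), THEN conjunct2, THEN conjunct2, THEN conjunct1] assms(2) by (rule bspec)

lemma mass_step: assumes "n < m"
  shows "dip S beta (rho (Suc n)) (\<lambda>_. 1) = dip S beta (rho 0) (\<lambda>_. 1)"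
  using allsteps[rule_format, OF assms(1), THEN conjunct2, THEN conjunct2, THEN conjunct2, THEN conjunct1] .

lemma st4: assumes "n < m" "z \<in> S"
  shows "(c (Suc n) z - ct (Suc n) z) / dt = th n"
  using allsteps[rule_format, OF assms(1), THEN conjunct2, THEN conjunct2, THEN conjunct2, THEN conjunct2, THEN conjunct1] assms(2) by (rule bspec)

lemma rho_range: assumes "k \<le> m" "z \<in> S" shows "0 \<le> rho k z \<and> rho k z \<le> M"
proof (cases k)
  case 0 then show ?thesis using init_rho assms(2) by blast
next
  case (Suc j)
  then have "j < m" using assms(1) by simp
  then have "gfn M (rho (Suc j) z) \<ge> 0" using st3 assms(2) by blast
  then show ?thesis using gfn_range[OF Mpos] Suc unfolding gfn_def by blast
qed

lemma mass: assumes "k \<le> m" shows "dip S beta (rho k) (\<lambda>_. 1) = dip S beta (rho 0) (\<lambda>_. 1)"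
proof (cases k)
  case 0 then show ?thesis by simp
next
  case (Suc j) then show ?thesis using mass_step[of j] assms by simp
qed

definition q :: "nat \<Rightarrow> 'd gfun" where
  "q k = (\<lambda>z. lam k z * gder M (rho k z) + xi k)"

lemma q0: "z \<in> S \<Longrightarrow> q 0 z = 0"
  unfolding q_def using lam0 xi0 by simp

lemma divdt: "a / dt = b \<Longrightarrow> a = dt * b"
  using dtpos by (simp add: field_simps)


lemma qsum: "k \<le> m \<Longrightarrow> dip S beta (q k) (\<lambda>_. 1) = 0"
proof (induction k)
  case 0 show ?case unfolding dip_def by (rule sum.neutral) (simp add: q0)
next
  case (Suc j)
  then have jm: "j < m" by simp
  have IH: "dip S beta (q j) (\<lambda>_. 1) = 0" using Suc by simp
  define L where "L = dlap grad dv (\<lambda>y. (rt (Suc j) y + rho j y) / 2)"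
  define V where "V = (\<lambda>y. eta M (3/2 * rho j y - 1/2 * prv rho j y)
                        *\<^sub>R grad (\<lambda>x. 3/2 * c j x - 1/2 * prv c j x) y)"
  have pw: "\<forall>z\<in>S. rho (Suc j) z - rho j z = dt * L z - dt * dv V z + dt * q j z + dt/2 * q (Suc j) z - dt/2 * q j z"
  proof
    fix z assume z: "z \<in> S"
    have e2: "rt (Suc j) z - rho j z = dt * (L z - dv V z + q j z)"
      using divdt[OF st2[OF jm z]] unfolding L_def V_def q_def by (simp add: add.assoc)
    have e3: "rho (Suc j) z - rt (Suc j) z = dt * ((q (Suc j) z - q j z) / 2)"
      using divdt[OF st3[OF jm z, THEN conjunct1]] unfolding q_def by (simp add: algebra_simps)
    show "rho (Suc j) z - rho j z = dt * L z - dt * dv V z + dt * q j z + dt/2 * q (Suc j) z - dt/2 * q j z"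
      using e2 e3 by (simp add: algebra_simps)
  qed
  have "dip S beta (\<lambda>z. rho (Suc j) z - rho j z) (\<lambda>_. 1)
      = dip S beta (\<lambda>z. dt * L z - dt * dv V z + dt * q j z + dt/2 * q (Suc j) z - dt/2 * q j z) (\<lambda>_. 1)"
    using pw by (rule dip_cong)
  then have "dip S beta (rho (Suc j)) (\<lambda>_. 1) - dip S beta (rho j) (\<lambda>_. 1)
      = dt * dip S beta L (\<lambda>_. 1) - dt * dip S beta (dv V) (\<lambda>_. 1) + dt * dip S beta (q j) (\<lambda>_. 1)
        + dt/2 * dip S beta (q (Suc j)) (\<lambda>_. 1) - dt/2 * dip S beta (q j) (\<lambda>_. 1)"
    by (simp only: dip_add dip_diff dip_scal)
  moreover have "dip S beta L (\<lambda>_. 1) = 0" unfolding L_def dlap_def by (rule dv_one[OF ds])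
  moreover have "dip S beta (dv V) (\<lambda>_. 1) = 0" by (rule dv_one[OF ds])
  moreover have "dip S beta (rho (Suc j)) (\<lambda>_. 1) = dip S beta (rho j) (\<lambda>_. 1)"
    using mass[of "Suc j"] mass[of j] jm by simp
  ultimately have "dt/2 * dip S beta (q (Suc j)) (\<lambda>_. 1) = 0" using IH by simp
  then show ?case using dtpos by simp
qed

lemma qrho: assumes "k \<le> m" shows "dip S beta (q k) (rho k) \<le> 0"
proof -
  have qk: "q k = (\<lambda>z. lam k z * (M - 2 * rho k z) + xi k)" unfolding q_def gder_def ..
  have h: "\<forall>z\<in>S. 0 \<le> lam k z \<and> lam k z * (rho k z * (M - rho k z)) = 0 \<and> 0 \<le> rho k z \<and> rho k z \<le> M"
  proof
    fix z assume z: "z \<in> S"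
    have "0 \<le> lam k z \<and> lam k z * (rho k z * (M - rho k z)) = 0"
    proof (cases k)
      case 0 then show ?thesis using lam0 z by simp
    next
      case (Suc j) then have "j < m" using assms by simp
      then show ?thesis using st3[OF _ z] Suc unfolding gfn_def by blast
    qed
    then show "0 \<le> lam k z \<and> lam k z * (rho k z * (M - rho k z)) = 0 \<and> 0 \<le> rho k z \<and> rho k z \<le> M"
      using rho_range[OF assms z] by blast
  qed
  show ?thesis unfolding qk
    by (rule qrho_gen[OF fin bpos h]) (use qsum[OF assms] qk in simp)
qed


lemma grad_c_suc: assumes nm: "n < m" and z: "z \<in> S"
  shows "grad (c (Suc n)) z = grad (ct (Suc n)) z"
proof -
  have e: "\<forall>y\<in>S. c (Suc n) y = 1 * ct (Suc n) y + (dt * th n) * 1"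
  proof
    fix y assume "y \<in> S"
    then have "c (Suc n) y - ct (Suc n) y = dt * th n" by (rule divdt[OF st4[OF nm]])
    then show "c (Suc n) y = 1 * ct (Suc n) y + (dt * th n) * 1" by simp
  qed
  have "grad (c (Suc n)) z = grad (\<lambda>y. 1 * ct (Suc n) y + (dt * th n) * 1) z"
    by (rule grad_ext[OF ds e z])
  also have "\<dots> = 1 *\<^sub>R grad (ct (Suc n)) z + (dt * th n) *\<^sub>R grad (\<lambda>_. 1) z"
    by (rule grad_lin[OF ds z, of 1 "ct (Suc n)" "dt * th n" "\<lambda>_. 1"])
  also have "\<dots> = grad (ct (Suc n)) z" using ds_grad1[OF ds] z by simp
  finally show ?thesis .
qed

lemma grad_half: assumes z: "z \<in> S"
  shows "grad (\<lambda>y. (u y + v y) / 2) z = (1/2) *\<^sub>R grad u z + (1/2) *\<^sub>R grad v z"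
proof -
  have "(\<lambda>y. (u y + v y) / 2) = (\<lambda>y. 1/2 * u y + 1/2 * v y)" by (rule ext) simp
  then show ?thesis using grad_lin[OF ds z, of "1/2" u "1/2" v] by simp
qed

lemma grad_sub: assumes z: "z \<in> S"
  shows "grad (\<lambda>y. u y - v y) z = grad u z - grad v z"
proof -
  have "(\<lambda>y. u y - v y) = (\<lambda>y. 1 * u y + (-1) * v y)" by (rule ext) simp
  then show ?thesis using grad_lin[OF ds z, of 1 u "-1" v] by simp
qed

lemma grad_comb: assumes z: "z \<in> S"
  shows "grad (\<lambda>x. 3/2 * u x - 1/2 * v x) z = (3/2) *\<^sub>R grad u z - (1/2) *\<^sub>R grad v z"
proof -
  have "(\<lambda>x. 3/2 * u x - 1/2 * v x) = (\<lambda>y. 3/2 * u y + (-1/2) * v y)" by (rule ext) simp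
  then show ?thesis using grad_lin[OF ds z, of "3/2" u "-1/2" v] by simp
qed

definition Dc :: "nat \<Rightarrow> 'd gfun" where
  "Dc n = dlap grad dv (\<lambda>z. (ct (Suc n) z + c n z) / 2)"

abbreviation Gc :: "nat \<Rightarrow> real" where
  "Gc k \<equiv> dvip S beta (grad (c k)) (grad (c k))"

lemma stepC: assumes nm: "n < m"
  shows "Gc (Suc n) + dt * dip S beta (Dc n) (Dc n)
     \<le> Gc n + dt * (9/2 * dip S beta (rho n) (rho n)) + dt * (1/2 * dip S beta (prv rho n) (prv rho n))"
proof -
  define ch where "ch = (\<lambda>z. (ct (Suc n) z + c n z) / 2)"
  define D where "D = Dc n"
  define f where "f = (\<lambda>z. 3/2 * rho n z - 1/2 * prv rho n z)"
  define G' where "G' = dvip S beta (grad (ct (Suc n))) (grad (ct (Suc n)))"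
  have gc: "Gc (Suc n) = G'" unfolding G'_def
    by (rule dvip_cong) (use grad_c_suc[OF nm] in auto)
  have sb: "dip S beta D (\<lambda>z. ct (Suc n) z - c n z) = - dvip S beta (grad ch) (grad (\<lambda>z. ct (Suc n) z - c n z))"
    unfolding D_def Dc_def dlap_def ch_def sbp[OF ds] by simp
  have half: "dvip S beta (grad ch) (grad (\<lambda>z. ct (Suc n) z - c n z)) = 1/2 * G' - 1/2 * Gc n"
  proof -
    have "dvip S beta (grad ch) (grad (\<lambda>z. ct (Suc n) z - c n z))
       = (\<Sum>z\<in>S. 1/2 * (beta z * (grad (ct (Suc n)) z \<bullet> grad (ct (Suc n)) z)) - 1/2 * (beta z * (grad (c n) z \<bullet> grad (c n) z)))"
      unfolding dvip_def
    proof (rule sum.cong[OF refl])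
      fix z assume z: "z \<in> S"
      show "beta z * (grad ch z \<bullet> grad (\<lambda>z. ct (Suc n) z - c n z) z) =
         1/2 * (beta z * (grad (ct (Suc n)) z \<bullet> grad (ct (Suc n)) z)) - 1/2 * (beta z * (grad (c n) z \<bullet> grad (c n) z))"
        unfolding ch_def grad_half[OF z] grad_sub[OF z]
        by (simp add: inner_diff_right inner_add_left inner_commute algebra_simps)
    qed
    then show ?thesis unfolding G'_def dvip_def by (simp only: sum_subtractf sum_distrib_left)
  qed
  have s1: "\<forall>z\<in>S. ct (Suc n) z - c n z = dt * (D z + f z)"
  proof
    fix z assume z: "z \<in> S"
    show "ct (Suc n) z - c n z = dt * (D z + f z)"
      using divdt[OF st1[OF nm z]] unfolding D_def Dc_def f_def by (simp add: algebra_simps)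
  qed
  have e: "dip S beta D (\<lambda>z. ct (Suc n) z - c n z) = dip S beta D (\<lambda>z. dt * (D z + f z))"
    using s1 by (rule dip_cong2)
  have key: "dip S beta (\<lambda>z. dt * (9/2 * (rho n z * rho n z)) + dt * (1/2 * (prv rho n z * prv rho n z))
                 - dt * (D z * D z) + 2 * (D z * (dt * (D z + f z)))) (\<lambda>_. 1) \<ge> 0"
  proof (rule dip_pw_nonneg[OF bpos], rule ballI)
    fix z assume z: "z \<in> S"
    have "f z ^ 2 \<le> 9/2 * (rho n z)^2 + 1/2 * (prv rho n z)^2" unfolding f_def by (rule ineq_sq)
    moreover have "0 \<le> (D z + f z)^2" by simp
    ultimately have "0 \<le> 9/2 * (rho n z * rho n z) + 1/2 * (prv rho n z * prv rho n z) + D z * D z + 2 * (D z * f z)"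
      by (simp add: power2_eq_square algebra_simps)
    then have "0 \<le> dt * (9/2 * (rho n z * rho n z) + 1/2 * (prv rho n z * prv rho n z) + D z * D z + 2 * (D z * f z))"
      using dtpos by simp
    then show "0 \<le> dt * (9/2 * (rho n z * rho n z)) + dt * (1/2 * (prv rho n z * prv rho n z))
                 - dt * (D z * D z) + 2 * (D z * (dt * (D z + f z)))"
      by (simp add: algebra_simps)
  qed
  have key2: "dt * (9/2 * dip S beta (rho n) (rho n)) + dt * (1/2 * dip S beta (prv rho n) (prv rho n))
                 - dt * dip S beta D D + 2 * dip S beta D (\<lambda>z. dt * (D z + f z)) \<ge> 0"
    using key by (simp only: dip_add dip_diff dip_scal) (simp only: dip_prod1)
  show ?thesis using key2 gc sb half e unfolding D_def[symmetric] by linarith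
qed


lemma vec_ineq: "((3/2) *\<^sub>R a - (1/2) *\<^sub>R b) \<bullet> ((3/2) *\<^sub>R a - (1/2) *\<^sub>R b) \<le> 9/2 * (a \<bullet> a) + 1/2 * (b \<bullet> (b :: real^'d))"
proof -
  have "0 \<le> ((3/2) *\<^sub>R a + (1/2) *\<^sub>R b) \<bullet> ((3/2) *\<^sub>R a + (1/2) *\<^sub>R b)" by simp
  then show ?thesis by (simp add: inner_diff_left inner_diff_right inner_add_left inner_add_right inner_commute algebra_simps)
qed

lemma stepR: assumes nm: "n < m"
  shows "dip S beta (rho (Suc n)) (rho (Suc n)) + dt^2/4 * dip S beta (q (Suc n)) (q (Suc n))
           + dt * dvip S beta (grad (\<lambda>z. (rt (Suc n) z + rho n z) / 2)) (grad (\<lambda>z. (rt (Suc n) z + rho n z) / 2))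
     \<le> dip S beta (rho n) (rho n) + dt^2/4 * dip S beta (q n) (q n)
           + dt * (9*M^2/16 * (9/2 * Gc n)) + dt * (9*M^2/16 * (1/2 * dvip S beta (grad (prv c n)) (grad (prv c n))))"
proof -
  define rh where "rh = (\<lambda>z. (rt (Suc n) z + rho n z) / 2)"
  define L where "L = dlap grad dv rh"
  define V where "V = (\<lambda>y. eta M (3/2 * rho n y - 1/2 * prv rho n y)
                        *\<^sub>R grad (\<lambda>x. 3/2 * c n x - 1/2 * prv c n x) y)"
  define GR where "GR = dvip S beta (grad rh) (grad rh)"
  define VG where "VG = dvip S beta V (grad rh)"
  define X where "X = dip S beta (rt (Suc n)) (rt (Suc n))"
  define R where "R = dip S beta (rho n) (rho n)"
  define R' where "R' = dip S beta (rho (Suc n)) (rho (Suc n))"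
  define Q where "Q = dip S beta (q n) (q n)"
  define Q' where "Q' = dip S beta (q (Suc n)) (q (Suc n))"
  define QRt where "QRt = dip S beta (q n) (rt (Suc n))"
  define QR where "QR = dip S beta (q n) (rho n)"
  define QR' where "QR' = dip S beta (q (Suc n)) (rho (Suc n))"
  define G1 where "G1 = Gc n"
  define G2 where "G2 = dvip S beta (grad (prv c n)) (grad (prv c n))"
  define K where "K = 9*M^2/16"
  have e2: "\<forall>z\<in>S. rt (Suc n) z - rho n z = dt * L z - dt * dv V z + dt * q n z"
  proof
    fix z assume z: "z \<in> S"
    show "rt (Suc n) z - rho n z = dt * L z - dt * dv V z + dt * q n z"
      using divdt[OF st2[OF nm z]] unfolding L_def V_def q_def rh_def by (simp add: algebra_simps)
  qed
  have e3: "\<forall>z\<in>S. rho (Suc n) z - dt/2 * q (Suc n) z = rt (Suc n) z - dt/2 * q n z"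
  proof
    fix z assume z: "z \<in> S"
    show "rho (Suc n) z - dt/2 * q (Suc n) z = rt (Suc n) z - dt/2 * q n z"
      using divdt[OF st3[OF nm z, THEN conjunct1]] unfolding q_def by (simp add: algebra_simps)
  qed
  have A1: "dip S beta (\<lambda>z. rt (Suc n) z - rho n z) rh
      = dt * dip S beta L rh - dt * dip S beta (dv V) rh + dt * dip S beta (q n) rh"
  proof -
    have "dip S beta (\<lambda>z. rt (Suc n) z - rho n z) rh = dip S beta (\<lambda>z. dt * L z - dt * dv V z + dt * q n z) rh"
      using e2 by (rule dip_cong)
    then show ?thesis by (simp only: dip_add dip_diff dip_scal)
  qed
  have A2: "dip S beta L rh = - GR" unfolding L_def dlap_def GR_def sbp[OF ds] by simp
  have A3: "dip S beta (dv V) rh = - VG" unfolding VG_def sbp[OF ds] by simp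
  have A4: "dip S beta (\<lambda>z. rt (Suc n) z - rho n z) rh = 1/2 * X - 1/2 * R"
  proof -
    have "dip S beta (\<lambda>z. rt (Suc n) z - rho n z) rh
       = (\<Sum>z\<in>S. 1/2 * (beta z * rt (Suc n) z * rt (Suc n) z) - 1/2 * (beta z * rho n z * rho n z))"
      unfolding dip_def
    proof (rule sum.cong[OF refl])
      fix z assume z: "z \<in> S"
      show "beta z * (rt (Suc n) z - rho n z) * rh z =
         1/2 * (beta z * rt (Suc n) z * rt (Suc n) z) - 1/2 * (beta z * rho n z * rho n z)"
        unfolding rh_def by (simp add: field_simps)
    qed
    then show ?thesis unfolding X_def R_def dip_def by (simp only: sum_subtractf sum_distrib_left)
  qed
  have A5: "dip S beta (q n) rh = 1/2 * QRt + 1/2 * QR"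
  proof -
    have "dip S beta (q n) rh = dip S beta (q n) (\<lambda>z. 1/2 * rt (Suc n) z + 1/2 * rho n z)"
      unfolding rh_def by (rule dip_cong2) simp
    then show ?thesis unfolding QRt_def QR_def by (simp only: dip_lin2)
  qed
  have A6: "R' - dt * QR' + dt^2/4 * Q' = X - dt * QRt + dt^2/4 * Q"
  proof -
    have "dip S beta (\<lambda>z. rho (Suc n) z * rho (Suc n) z - dt * (q (Suc n) z * rho (Suc n) z) + dt^2/4 * (q (Suc n) z * q (Suc n) z)) (\<lambda>_. 1)
        = dip S beta (\<lambda>z. rt (Suc n) z * rt (Suc n) z - dt * (q n z * rt (Suc n) z) + dt^2/4 * (q n z * q n z)) (\<lambda>_. 1)"
    proof (rule dip_cong, rule ballI)
      fix z assume z: "z \<in> S"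
      have h: "rho (Suc n) z - dt/2 * q (Suc n) z = rt (Suc n) z - dt/2 * q n z" using e3 z by blast
      have "rho (Suc n) z * rho (Suc n) z - dt * (q (Suc n) z * rho (Suc n) z) + dt^2/4 * (q (Suc n) z * q (Suc n) z)
          = (rho (Suc n) z - dt/2 * q (Suc n) z)^2" by (simp add: power2_eq_square algebra_simps)
      also have "\<dots> = (rt (Suc n) z - dt/2 * q n z)^2" using h by simp
      also have "\<dots> = rt (Suc n) z * rt (Suc n) z - dt * (q n z * rt (Suc n) z) + dt^2/4 * (q n z * q n z)"
        by (simp add: power2_eq_square algebra_simps)
      finally show "rho (Suc n) z * rho (Suc n) z - dt * (q (Suc n) z * rho (Suc n) z) + dt^2/4 * (q (Suc n) z * q (Suc n) z)
          = rt (Suc n) z * rt (Suc n) z - dt * (q n z * rt (Suc n) z) + dt^2/4 * (q n z * q n z)" .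
    qed
    then show ?thesis unfolding R'_def QR'_def Q'_def X_def QRt_def Q_def
      by (simp only: dip_add dip_diff dip_scal) (simp only: dip_prod1)
  qed
  have A7: "QR \<le> 0" "QR' \<le> 0" unfolding QR_def QR'_def using qrho[of n] qrho[of "Suc n"] nm by simp_all
  have A8: "2 * VG \<le> GR + K * (9/2 * G1) + K * (1/2 * G2)"
    unfolding VG_def GR_def G1_def G2_def dvip_def
  proof (simp only: sum_distrib_left sum.distrib[symmetric], rule sum_mono)
    fix z assume z: "z \<in> S"
    define g where "g = grad rh z"
    define a where "a = grad (c n) z"
    define b where "b = grad (prv c n) z"
    have Vz: "V z = eta M (3/2 * rho n z - 1/2 * prv rho n z) *\<^sub>R ((3/2) *\<^sub>R a - (1/2) *\<^sub>R b)"
      unfolding V_def a_def b_def grad_comb[OF z] ..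
    have pr: "0 \<le> prv rho n z \<and> prv rho n z \<le> M"
      unfolding prv_def using rho_range[OF _ z, of 0] rho_range[OF _ z, of "n - 1"] nm by auto
    have eb: "(eta M (3/2 * rho n z - 1/2 * prv rho n z))^2 \<le> K"
      unfolding K_def using eta_bound[OF Mpos] rho_range[OF _ z, of n] nm pr by auto
    have w: "((3/2) *\<^sub>R a - (1/2) *\<^sub>R b) \<bullet> ((3/2) *\<^sub>R a - (1/2) *\<^sub>R b) \<le> 9/2 * (a \<bullet> a) + 1/2 * (b \<bullet> b)"
      by (rule vec_ineq)
    have VV: "V z \<bullet> V z \<le> K * (9/2 * (a \<bullet> a) + 1/2 * (b \<bullet> b))"
    proof -
      have "V z \<bullet> V z = (eta M (3/2 * rho n z - 1/2 * prv rho n z))^2 * (((3/2) *\<^sub>R a - (1/2) *\<^sub>R b) \<bullet> ((3/2) *\<^sub>R a - (1/2) *\<^sub>R b))"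
        unfolding Vz by (simp add: power2_eq_square)
      also have "\<dots> \<le> K * (9/2 * (a \<bullet> a) + 1/2 * (b \<bullet> b))"
        by (rule mult_mono[OF eb w]) (use Mpos in \<open>simp_all add: K_def\<close>)
      finally show ?thesis .
    qed
    have cs: "2 * (V z \<bullet> g) \<le> V z \<bullet> V z + g \<bullet> g"
    proof -
      have "0 \<le> (V z - g) \<bullet> (V z - g)" by simp
      then show ?thesis by (simp add: inner_diff_left inner_diff_right inner_commute)
    qed
    have bz: "beta z > 0" using bpos z by blast
    have "2 * (V z \<bullet> g) \<le> g \<bullet> g + K * (9/2 * (a \<bullet> a)) + K * (1/2 * (b \<bullet> b))"
      using cs VV by (simp add: algebra_simps)
    then have "beta z * (2 * (V z \<bullet> g)) \<le> beta z * (g \<bullet> g + K * (9/2 * (a \<bullet> a)) + K * (1/2 * (b \<bullet> b)))"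
      using bz by simp
    then show "2 * (beta z * (V z \<bullet> grad rh z)) \<le> beta z * (grad rh z \<bullet> grad rh z)
        + K * (9/2 * (beta z * (grad (c n) z \<bullet> grad (c n) z))) + K * (1/2 * (beta z * (grad (prv c n) z \<bullet> grad (prv c n) z)))"
      unfolding g_def a_def b_def by (simp add: algebra_simps)
  qed
  have B1: "1/2 * X - 1/2 * R = - (dt * GR) + dt * VG + dt * QRt / 2 + dt * QR / 2"
    using A1 A2 A3 A4 A5 by (simp add: algebra_simps)
  have B2: "dt * (2 * VG) \<le> dt * (GR + K * (9/2 * G1) + K * (1/2 * G2))"
    using A8 dtpos by (intro mult_left_mono) simp_all
  have B3: "dt * QR \<le> 0" "dt * QR' \<le> 0" using A7 dtpos by (simp_all add: mult_nonneg_nonpos)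
  have B2': "2 * (dt * VG) \<le> dt * GR + dt * (K * (9/2 * G1)) + dt * (K * (1/2 * G2))"
    using B2 by (simp add: algebra_simps)
  have "R' + dt^2/4 * Q' + dt * GR \<le> R + dt^2/4 * Q + dt * (K * (9/2 * G1)) + dt * (K * (1/2 * G2))"
    using B1 B2' B3 A6 by linarith
  then show ?thesis unfolding R'_def Q'_def GR_def rh_def R_def Q_def K_def G1_def G2_def .
qed


definition GRf :: "nat \<Rightarrow> real" where
  "GRf n = dvip S beta (grad (\<lambda>z. (rt (Suc n) z + rho n z) / 2)) (grad (\<lambda>z. (rt (Suc n) z + rho n z) / 2))"

definition Pf :: "nat \<Rightarrow> real" where
  "Pf k = dip S beta (rho k) (rho k) + Gc k + dt * (\<Sum>n<k. dip S beta (Dc n) (Dc n))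
          + dt^2/4 * dip S beta (q k) (q k) + dt * (\<Sum>n<k. GRf n)"

definition af :: "nat \<Rightarrow> real" where
  "af k = dip S beta (rho k) (rho k) + Gc k"

definition K2 :: real where "K2 = 9/2 * (1 + 9*M^2/16)"

lemma K2_nonneg: "K2 \<ge> 0" unfolding K2_def by simp

lemma af_le_Pf: "af k \<le> Pf k"
proof -
  have "0 \<le> dip S beta (q k) (q k)" by (rule dip_nonneg[OF bpos])
  moreover have "0 \<le> (\<Sum>n<k. dip S beta (Dc n) (Dc n))" by (intro sum_nonneg dip_nonneg[OF bpos])
  moreover have "0 \<le> (\<Sum>n<k. GRf n)" unfolding GRf_def by (intro sum_nonneg dvip_nonneg[OF bpos])
  ultimately show ?thesis unfolding af_def Pf_def using dtpos by simp
qed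

lemma P_step: assumes nm: "n < m" shows "Pf (Suc n) \<le> Pf n + (dt * K2) * (af n + af (n - 1))"
proof -
  have C: "Gc (Suc n) + dt * dip S beta (Dc n) (Dc n)
     \<le> Gc n + dt * (9/2 * dip S beta (rho n) (rho n)) + dt * (1/2 * dip S beta (rho (n - 1)) (rho (n - 1)))"
    using stepC[OF nm] by (simp add: prv_def split: if_splits)
  have R: "dip S beta (rho (Suc n)) (rho (Suc n)) + dt^2/4 * dip S beta (q (Suc n)) (q (Suc n)) + dt * GRf n
     \<le> dip S beta (rho n) (rho n) + dt^2/4 * dip S beta (q n) (q n)
           + dt * (9*M^2/16 * (9/2 * Gc n)) + dt * (9*M^2/16 * (1/2 * Gc (n - 1)))"
    using stepR[OF nm] unfolding GRf_def by (simp add: prv_def split: if_splits)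
  define r0 where "r0 = dip S beta (rho n) (rho n)"
  define r1 where "r1 = dip S beta (rho (n - 1)) (rho (n - 1))"
  define g0 where "g0 = Gc n"
  define g1 where "g1 = Gc (n - 1)"
  define K where "K = 9*M^2/16"
  have nn: "r0 \<ge> 0" "r1 \<ge> 0" "g0 \<ge> 0" "g1 \<ge> 0" "K \<ge> 0"
    unfolding r0_def r1_def g0_def g1_def K_def by (simp_all add: dip_nonneg[OF bpos] dvip_nonneg[OF bpos])
  have "9/2 * r0 + 1/2 * r1 + K * (9/2 * g0) + K * (1/2 * g1) \<le> K2 * (r0 + g0 + (r1 + g1))"
  proof -
    have "K2 * (r0 + g0 + (r1 + g1)) - (9/2 * r0 + 1/2 * r1 + K * (9/2 * g0) + K * (1/2 * g1))
        = 9/2 * K * r0 + (4 + 9/2 * K) * r1 + 9/2 * g0 + (4 * K + 9/2) * g1 + 0 * K"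
      unfolding K2_def K_def by (simp add: field_simps)
    moreover have "0 \<le> 9/2 * K * r0 + (4 + 9/2 * K) * r1 + 9/2 * g0 + (4 * K + 9/2) * g1 + 0 * K"
      using nn by simp
    ultimately show ?thesis by linarith
  qed
  then have "dt * (9/2 * r0 + 1/2 * r1 + K * (9/2 * g0) + K * (1/2 * g1)) \<le> dt * (K2 * (r0 + g0 + (r1 + g1)))"
    using dtpos by (intro mult_left_mono) simp_all
  then have main: "dt * (9/2 * r0) + dt * (1/2 * r1) + dt * (K * (9/2 * g0)) + dt * (K * (1/2 * g1))
      \<le> (dt * K2) * (af n + af (n - 1))"
    unfolding af_def r0_def[symmetric] r1_def[symmetric] g0_def[symmetric] g1_def[symmetric]
    by (simp add: algebra_simps)
  have "Pf (Suc n) = dip S beta (rho (Suc n)) (rho (Suc n)) + dt^2/4 * dip S beta (q (Suc n)) (q (Suc n)) + dt * GRf n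
      + (Gc (Suc n) + dt * dip S beta (Dc n) (Dc n))
      + dt * (\<Sum>i<n. dip S beta (Dc i) (Dc i)) + dt * (\<Sum>i<n. GRf i)"
    unfolding Pf_def by (simp add: algebra_simps)
  moreover have "Pf n = dip S beta (rho n) (rho n) + dt^2/4 * dip S beta (q n) (q n) + Gc n
      + dt * (\<Sum>i<n. dip S beta (Dc i) (Dc i)) + dt * (\<Sum>i<n. GRf i)"
    unfolding Pf_def by (simp add: algebra_simps)
  ultimately show ?thesis using C R main unfolding r0_def r1_def g0_def g1_def K_def by linarith
qed

lemma final: assumes T: "real m * dt \<le> T"
  shows "Pf m \<le> exp (2 * K2 * T) * (dip S beta (rho 0) (rho 0) + Gc 0)"
proof -
  have P0: "Pf 0 = dip S beta (rho 0) (rho 0) + Gc 0"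
  proof -
    have "dip S beta (q 0) (q 0) = 0" unfolding dip_def by (rule sum.neutral) (simp add: q0)
    then show ?thesis unfolding Pf_def by simp
  qed
  have P0nn: "Pf 0 \<ge> 0" unfolding P0 by (simp add: dip_nonneg[OF bpos] dvip_nonneg[OF bpos])
  have h: "dt * K2 \<ge> 0" using dtpos K2_nonneg by simp
  have "\<forall>k\<le>m. Pf k \<le> (1 + 2*(dt*K2))^m * Pf 0"
    by (rule gronwall[where h="dt*K2" and P=Pf and a=af and m=m and n=m]) (use h P0nn af_le_Pf P_step in auto)
  then have "Pf m \<le> (1 + 2*(dt*K2))^m * Pf 0" by simp
  also have "\<dots> \<le> exp (2*(dt*K2))^m * Pf 0"
  proof (intro mult_right_mono power_mono P0nn)
    show "1 + 2 * (dt * K2) \<le> exp (2 * (dt * K2))" by (rule exp_ge_add_one_self)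
    show "0 \<le> 1 + 2 * (dt * K2)" using h by simp
  qed
  also have "exp (2*(dt*K2))^m = exp (2*K2*(real m * dt))"
    by (simp add: exp_of_nat_mult[symmetric] algebra_simps)
  also have "\<dots> \<le> exp (2*K2*T)" using T K2_nonneg by (intro exp_mono mult_left_mono) simp_all
  finally show ?thesis using P0nn P0 by (simp add: mult_right_mono)
qed

end

theorem mainTheorem9:
  fixes M T :: real
  assumes "M > 0" and "T > 0"
  shows "\<exists>C>0. \<forall>(S :: (real^'d) set) beta grad dv \<sigma> dt rho c ct rt lam xi th m.
     disc_setting S beta grad dv \<and> \<sigma> > 0 \<and> dt > 0 \<and>
     cn_scheme S beta grad dv M \<sigma> dt rho c ct rt lam xi th m \<and>
     m \<ge> 1 \<and> real m * dt \<le> T \<longrightarrow>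
       (dnorm S beta (rho m))\<^sup>2 + (dvnorm S beta (grad (c m)))\<^sup>2
       + dt * (\<Sum>n<m. (dnorm S beta (dlap grad dv (\<lambda>z. (ct (Suc n) z + c n z) / 2)))\<^sup>2)
       + dt\<^sup>2 / 4 * (dnorm S beta (\<lambda>z. lam m z * gder M (rho m z) + xi m))\<^sup>2
       + dt * (\<Sum>n<m. (dvnorm S beta (grad (\<lambda>z. (rt (Suc n) z + rho n z) / 2)))\<^sup>2)
       \<le> C * ((dnorm S beta (rho 0))\<^sup>2 + (dvnorm S beta (grad (c 0)))\<^sup>2)"
proof -
  define KK where "KK = 9/2 * (1 + 9*M^2/16)"
  show ?thesis
  proof (rule exI[of _ "exp (2 * KK * T)"], intro conjI allI impI)
    show "exp (2 * KK * T) > 0" by simp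
  next
    fix S :: "(real^'d) set" and beta grad dv \<sigma> dt rho c ct rt lam xi th m
    assume H: "disc_setting S beta grad dv \<and> \<sigma> > 0 \<and> dt > 0 \<and>
     cn_scheme S beta grad dv M \<sigma> dt rho c ct rt lam xi th m \<and>
     m \<ge> 1 \<and> real m * dt \<le> T"
    have ds: "disc_setting S beta grad dv" using H by blast
    have dtp: "dt > 0" using H by blast
    have sch: "cn_scheme S beta grad dv M \<sigma> dt rho c ct rt lam xi th m" using H by blast
    have Tm: "real m * dt \<le> T" using H by blast
    interpret cnl S beta grad dv M \<sigma> dt rho c ct rt lam xi th m
      by unfold_locales (rule ds, rule assms(1), rule dtp, rule sch)
    have b: "\<forall>z\<in>S. beta z > 0" by (rule bpos)
    have fin: "Pf m \<le> exp (2 * K2 * T) * (dip S beta (rho 0) (rho 0) + Gc 0)" by (rule final[OF Tm])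
    have qm: "(\<lambda>z. lam m z * gder M (rho m z) + xi m) = q m" unfolding q_def ..
    have dcn: "\<And>n. dlap grad dv (\<lambda>z. (ct (Suc n) z + c n z) / 2) = Dc n" unfolding Dc_def ..
    have grn: "\<And>n. (dvnorm S beta (grad (\<lambda>z. (rt (Suc n) z + rho n z) / 2)))\<^sup>2 = GRf n"
      unfolding GRf_def by (rule dvnorm_sq[OF b])
    show "(dnorm S beta (rho m))\<^sup>2 + (dvnorm S beta (grad (c m)))\<^sup>2
       + dt * (\<Sum>n<m. (dnorm S beta (dlap grad dv (\<lambda>z. (ct (Suc n) z + c n z) / 2)))\<^sup>2)
       + dt\<^sup>2 / 4 * (dnorm S beta (\<lambda>z. lam m z * gder M (rho m z) + xi m))\<^sup>2
       + dt * (\<Sum>n<m. (dvnorm S beta (grad (\<lambda>z. (rt (Suc n) z + rho n z) / 2)))\<^sup>2)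
       \<le> exp (2 * KK * T) * ((dnorm S beta (rho 0))\<^sup>2 + (dvnorm S beta (grad (c 0)))\<^sup>2)"
      unfolding qm dcn dnorm_sq[OF b] dvnorm_sq[OF b]
      using fin unfolding Pf_def K2_def KK_def GRf_def by simp
  qed
qed

end
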